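(* For every $n\ge 1$ and every unit interval order $U\in\mathcal U_n$, we have $a(U)=\zeta(p(U))$.
   Context: Unit interval orders: let $\mathcal I=\{I_1,\dots,I_n\}$ be a set of $n$ closed intervals of length $1$ in $\mathbb R$, numbered from left to right. The poset $U(\mathcal I)$ on $\{1,\dots,n\}$ is defined by $i\prec j$ iff $I_i$ lies strictly to the left of $I_j$ (the right endpoint of $I_i$ is less than the left endpoint of $I_j$). A unit interval order is a relation on $\{1,\dots,n\}$ arising in this way; $\mathcal U_n$ denotes the set of unit interval orders on $\{1,\dots,n\}$. Dyck paths: a Dyck path of length $n$ is a lattice path from $(0,0)$ to $(n,n)$ with steps $(0,1)$ (up, letter $a$) and $(1,0)$ (right, letter $b$) never going below the line $y=x$; $\mathcal D_n$ is the set of them. For $1\le i<j\le n$ the box $(i,j)$ is the unit square $[i-1,i]\times[j-1,j]$. The area set of a Dyck path is the set of boxes lying between the path and the diagonal. The area sequence $(a_1,\dots,a_n)$ records, for each horizontal row from bottom to top, the number of boxes of the area set in that row; area sequences of Dyck paths are exactly the nonnegative integer sequences with $a_1=0$ and $a_i\le a_{i-1}+1$. The map $a$: for $U\in\mathcal U_n$ with order $\prec$, $a(U)$ is the Dyck path whose area set is $\{(i,j): 1\le i<j\le n,\ i\not\prec j\}$. Part listings: for a sequence $w=(w_1,\dots,w_n)$ of nonnegative integers, $P(w)$ is the poset on $\{1,\dots,n\}$ with $i\prec j$ iff either $w_j-w_i\ge 2$, or $w_j-w_i=1$ and $i<j$. It is a fact (established in the paper) that for every $U\in\mathcal U_n$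 there is a unique sequence $w$ which is the area sequence of a Dyck path and such that $P(w)$ is isomorphic (as a poset) to $U$; $p(U)$ denotes the Dyck path with this area sequence. The zeta map $\zeta:\mathcal D_n\to\mathcal D_n$: given $D$, label the top endpoint of each up step of $D$ by $a$ and the right endpoint of each right step by $b$. Read these labels first along the line $y=x$ from bottom-left to top-right, then along $y=x+1$ in the same direction, then along $y=x+2$, etc. Interpreting each $b$ read as an up step and each $a$ read as a right step yields the lattice path $\zeta(D)$ from $(0,0)$ to $(n,n)$ (which is a Dyck path). *)

theory Defs
  imports Complex_Main "HOL-Library.Product_Lexorder"
begin

definition unit_interval_order :: "nat \<Rightarrow> (nat \<times> nat) set \<Rightarrow> bool" where
  "unit_interval_order n U \<longleftrightarrow>
     (\<exists>x :: nat \<Rightarrow> real. strict_mono_on {1..n} x \<and>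
        U = {(i, j). i \<in> {1..n} \<and> j \<in> {1..n} \<and> x i + 1 < x j})"

text \<open>Up = (0,1) step (letter a), Rt = (1,0) step (letter b).\<close>
datatype step = Up | Rt

definition cnt :: "step \<Rightarrow> step list \<Rightarrow> nat" where
  "cnt s xs = length (filter (\<lambda>t. t = s) xs)"

definition dyck :: "nat \<Rightarrow> step list \<Rightarrow> bool" where
  "dyck n D \<longleftrightarrow> length D = 2 * n \<and> cnt Up D = n \<and>
     (\<forall>k \<le> length D. cnt Rt (take k D) \<le> cnt Up (take k D))"

text \<open>Position (0-based index in the list) of the j-th up step, j \<ge> 1.\<close>
definition up_pos :: "step list \<Rightarrow> nat \<Rightarrow> nat" where
  "up_pos D j = filter (\<lambda>k. D ! k = Up) [0..<length D] ! (j - 1)"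

text \<open>x-coordinate of the j-th up step (the one in row j, i.e. from y = j-1 to y = j).\<close>
definition up_x :: "step list \<Rightarrow> nat \<Rightarrow> nat" where
  "up_x D j = cnt Rt (take (up_pos D j) D)"

text \<open>Area set: box (i,j) = [i-1,i]\<times>[j-1,j] with 1 \<le> i < j \<le> n lies between the path
  and the diagonal iff it lies to the right of the up step of row j.\<close>
definition area_set :: "nat \<Rightarrow> step list \<Rightarrow> (nat \<times> nat) set" where
  "area_set n D = {(i, j). 1 \<le> i \<and> i < j \<and> j \<le> n \<and> up_x D j < i}"

definition area_seq :: "nat \<Rightarrow> step list \<Rightarrow> nat \<Rightarrow> nat" where
  "area_seq n D j = card {i. (i, j) \<in> area_set n D}"

definition a_map :: "nat \<Rightarrow> (nat \<times> nat) set \<Rightarrow> step list" where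
  "a_map n U = (THE D. dyck n D \<and>
      area_set n D = {(i, j). 1 \<le> i \<and> i < j \<and> j \<le> n \<and> (i, j) \<notin> U})"

definition part_poset :: "nat \<Rightarrow> (nat \<Rightarrow> nat) \<Rightarrow> (nat \<times> nat) set" where
  "part_poset n w = {(i, j). i \<in> {1..n} \<and> j \<in> {1..n} \<and>
      (int (w j) - int (w i) \<ge> 2 \<or> (int (w j) - int (w i) = 1 \<and> i < j))}"

definition poset_iso :: "nat \<Rightarrow> (nat \<times> nat) set \<Rightarrow> (nat \<times> nat) set \<Rightarrow> bool" where
  "poset_iso n R S \<longleftrightarrow> (\<exists>f. bij_betw f {1..n} {1..n} \<and>
      (\<forall>i \<in> {1..n}. \<forall>j \<in> {1..n}. (i, j) \<in> R \<longleftrightarrow> (f i, f j) \<in> S))"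

definition p_map :: "nat \<Rightarrow> (nat \<times> nat) set \<Rightarrow> step list" where
  "p_map n U = (THE D. dyck n D \<and> poset_iso n (part_poset n (area_seq n D)) U)"

text \<open>Step t (1-based) ends at the point (pt_x D t, pt_y D t); its label is D ! (t-1)
  (a for Up, b for Rt). Labels are read diagonal by diagonal (y - x = 0, 1, 2, ...),
  each diagonal from bottom-left to top-right (increasing x).\<close>

definition pt_x :: "step list \<Rightarrow> nat \<Rightarrow> nat" where
  "pt_x D t = cnt Rt (take t D)"

definition pt_y :: "step list \<Rightarrow> nat \<Rightarrow> nat" where
  "pt_y D t = cnt Up (take t D)"

fun swap_step :: "step \<Rightarrow> step" where
  "swap_step Up = Rt"
| "swap_step Rt = Up"

definition zeta :: "step list \<Rightarrow> step list" where
  "zeta D = map (\<lambda>t. swap_step (D ! (t - 1)))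
     (sort_key (\<lambda>t. (pt_y D t - pt_x D t, pt_x D t)) [1..<length D + 1])"

end

theory Submission
  imports Defs "HOL-Library.Multiset"
begin


lemma cnt_conv: "cnt s xs = card {i. i < length xs \<and> xs!i = s}"
  by (simp add: cnt_def length_filter_conv_card)

lemma cnt_take: "cnt s (take m xs) = card {i. i < m \<and> i < length xs \<and> xs!i = s}"
  unfolding cnt_conv by (rule arg_cong[where f=card]) auto

lemma cnt_Up_Rt: "cnt Up xs + cnt Rt xs = length xs"
proof (induct xs)
  case Nil then show ?case by (simp add: cnt_def)
next
  case (Cons a xs) then show ?case by (cases a) (auto simp: cnt_def)
qed

lemma cnt_map_distinct:
  assumes "distinct T"
  shows "cnt s (map lab T) = card {y \<in> set T. lab y = s}"
proof -
  have "cnt s (map lab T) = length (filter (\<lambda>y. lab y = s) T)"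
    by (simp add: cnt_def filter_map o_def)
  also have "\<dots> = card (set (filter (\<lambda>y. lab y = s) T))"
    using assms by (metis distinct_card distinct_filter)
  finally show ?thesis by simp
qed

lemma cnt_take_mono: "m \<le> m' \<Longrightarrow> cnt s (take m xs) \<le> cnt s (take m' xs)"
  unfolding cnt_take by (rule card_mono) auto

lemma take_set_sorted:
  fixes key :: "'a \<Rightarrow> 'b::linorder"
  assumes "sorted_wrt (<) (map key S)" "q < length S"
  shows "set (take q S) = {y \<in> set S. key y < key (S!q)}"
proof -
  have nth: "key (S!i) < key (S!j)" if "i < j" "j < length S" for i j
    using sorted_wrt_nth_less[OF assms(1), of i j] that by simp
  show ?thesis
  proof (intro equalityI subsetI)
    fix y assume "y \<in> set (take q S)"
    then obtain i where "i < q" "S!i = y" using assms(2)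
      by (auto simp: in_set_conv_nth)
    then show "y \<in> {y \<in> set S. key y < key (S!q)}"
      using nth[of i q] assms(2) by (auto dest: in_set_takeD intro: nth_mem)
  next
    fix y assume y: "y \<in> {y \<in> set S. key y < key (S!q)}"
    then obtain i where i: "i < length S" "S!i = y" by (auto simp: in_set_conv_nth)
    have "i < q"
    proof (rule ccontr)
      assume "\<not> i < q"
      then have "i = q \<or> q < i" by auto
      then show False using nth[of q i] i y by auto
    qed
    then show "y \<in> set (take q S)" using i assms(2)
      by (auto simp: in_set_conv_nth intro!: exI[of _ i])
  qed
qed

lemma sorted_key_strict:
  assumes "distinct xs" "inj_on key (set xs)"
  shows "sorted_wrt (<) (map key (sort_key key xs))"
proof -
  have "distinct (map key (sort_key key xs))"
    using assms by (simp add: distinct_map)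
  then show ?thesis using sorted_sort_key[of key xs] by (simp add: strict_sorted_iff)
qed

lemma card_take_sorted:
  fixes key :: "'a \<Rightarrow> 'b::linorder"
  assumes "sorted_wrt (<) (map key S)" "q < length S" "distinct S"
  shows "card {y \<in> set S. key y < key (S!q)} = q"
proof -
  have "card (set (take q S)) = q" using assms by (simp add: distinct_card)
  then show ?thesis using take_set_sorted[OF assms(1,2)] by simp
qed


definition upl :: "step list \<Rightarrow> nat list" where
  "upl D = filter (\<lambda>k. D!k = Up) [0..<length D]"

lemma upl_sorted: "sorted_wrt (<) (upl D)"
  unfolding upl_def by (rule sorted_wrt_filter) (rule sorted_wrt_upt)

lemma upl_distinct: "distinct (upl D)"
  unfolding upl_def by simp

lemma upl_set: "set (upl D) = {k. k < length D \<and> D!k = Up}"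
  unfolding upl_def by auto

lemma upl_length: "length (upl D) = cnt Up D"
  unfolding upl_def cnt_conv by (auto simp: length_filter_conv_card intro!: arg_cong[where f=card])

lemma up_pos_upl: "up_pos D j = upl D ! (j - 1)"
  unfolding up_pos_def upl_def by simp

lemma cnt_take_upl: "cnt Up (take p D) = card {y \<in> set (upl D). y < p}"
  unfolding cnt_take upl_set by (rule arg_cong[where f=card]) auto

lemma up_pos_props:
  assumes "1 \<le> r" "r \<le> cnt Up D"
  shows "up_pos D r < length D" "D ! up_pos D r = Up" "cnt Up (take (up_pos D r) D) = r - 1"
proof -
  have r: "r - 1 < length (upl D)" using assms upl_length[of D] by simp
  then have "upl D ! (r - 1) \<in> set (upl D)" by simp
  then show "up_pos D r < length D" "D ! up_pos D r = Up"
    unfolding up_pos_upl upl_set by auto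
  show "cnt Up (take (up_pos D r) D) = r - 1"
    unfolding cnt_take_upl up_pos_upl
    using card_take_sorted[of id "upl D" "r - 1"] upl_sorted upl_distinct r by simp
qed

lemma up_pos_mono:
  assumes "1 \<le> r" "r < r'" "r' \<le> cnt Up D"
  shows "up_pos D r < up_pos D r'"
  unfolding up_pos_upl
  using sorted_wrt_nth_less[OF upl_sorted, of "r - 1" "r' - 1" D] assms upl_length[of D] by simp

lemma up_pos_surj:
  assumes "k < length D" "D!k = Up"
  shows "\<exists>r. 1 \<le> r \<and> r \<le> cnt Up D \<and> up_pos D r = k"
proof -
  have "k \<in> set (upl D)" using assms upl_set by auto
  then obtain i where "i < length (upl D)" "upl D ! i = k" by (auto simp: in_set_conv_nth)
  then show ?thesis using upl_length[of D] unfolding up_pos_upl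
    by (intro exI[of _ "Suc i"]) auto
qed

lemma up_pos_char:
  assumes "q < length L" "L!q = Up" "cnt Up (take q L) = j - 1" "1 \<le> j"
  shows "up_pos L j = q"
proof -
  have "q \<in> set (upl L)" using assms upl_set by auto
  then obtain i where i: "i < length (upl L)" "upl L ! i = q" by (auto simp: in_set_conv_nth)
  have "card {y \<in> set (upl L). id y < id (upl L ! i)} = i"
    using card_take_sorted[of id "upl L" i] upl_sorted upl_distinct i by simp
  then have "cnt Up (take q L) = i" using i unfolding cnt_take_upl by simp
  then have "i = j - 1" using assms by simp
  then show ?thesis using i unfolding up_pos_upl by simp
qed

lemma up_pos_up_x:
  assumes "1 \<le> r" "r \<le> cnt Up D"
  shows "up_pos D r = up_x D r + (r - 1)"
proof -
  have "cnt Up (take (up_pos D r) D) + cnt Rt (take (up_pos D r) D) = up_pos D r"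
    using cnt_Up_Rt[of "take (up_pos D r) D"] up_pos_props(1)[OF assms] by simp
  then show ?thesis using up_pos_props(3)[OF assms] unfolding up_x_def by simp
qed

lemma up_pos_inj: "inj_on (up_pos D) {r. 1 \<le> r \<and> r \<le> cnt Up D}"
proof (rule inj_onI)
  fix r r' assume "r \<in> {r. 1 \<le> r \<and> r \<le> cnt Up D}" "r' \<in> {r. 1 \<le> r \<and> r \<le> cnt Up D}"
    "up_pos D r = up_pos D r'"
  then show "r = r'" using up_pos_mono[of r r' D] up_pos_mono[of r' r D]
    by (cases r r' rule: linorder_cases) auto
qed

lemma pt_y_card:
  assumes "t \<le> length D"
  shows "pt_y D t = card {r. 1 \<le> r \<and> r \<le> cnt Up D \<and> up_pos D r < t}"
proof -
  have "{k. k < t \<and> k < length D \<and> D!k = Up} = up_pos D ` {r. 1 \<le> r \<and> r \<le> cnt Up D \<and> up_pos D r < t}"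
  proof (intro equalityI subsetI)
    fix k assume "k \<in> {k. k < t \<and> k < length D \<and> D!k = Up}"
    then show "k \<in> up_pos D ` {r. 1 \<le> r \<and> r \<le> cnt Up D \<and> up_pos D r < t}"
      using up_pos_surj[of k D] by force
  next
    fix k assume "k \<in> up_pos D ` {r. 1 \<le> r \<and> r \<le> cnt Up D \<and> up_pos D r < t}"
    then show "k \<in> {k. k < t \<and> k < length D \<and> D!k = Up}"
      using up_pos_props(1,2) by auto
  qed
  moreover have "inj_on (up_pos D) {r. 1 \<le> r \<and> r \<le> cnt Up D \<and> up_pos D r < t}"
    by (rule inj_on_subset[OF up_pos_inj]) auto
  ultimately show ?thesis unfolding pt_y_def cnt_take by (simp add: card_image)
qed

lemma pt_x_pt_y: "t \<le> length D \<Longrightarrow> pt_x D t + pt_y D t = t"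
  unfolding pt_x_def pt_y_def using cnt_Up_Rt[of "take t D"] by simp

lemma pt_step:
  assumes "1 \<le> t" "t \<le> length D"
  shows "D!(t-1) = Up \<longleftrightarrow> pt_y D t = Suc (pt_y D (t - 1))"
proof -
  have "take t D = take (t - 1) D @ [D!(t-1)]"
    using take_Suc_conv_app_nth[of "t-1" D] assms by simp
  then show ?thesis unfolding pt_y_def cnt_def by (cases "D!(t-1)") auto
qed

lemma dyck_basic:
  assumes "dyck n D"
  shows "length D = 2*n" "cnt Up D = n" "cnt Rt D = n"
  using assms cnt_Up_Rt[of D] unfolding dyck_def by auto

lemma up_x_le:
  assumes "dyck n D" "1 \<le> r" "r \<le> n"
  shows "up_x D r \<le> r - 1"
proof -
  have r: "r \<le> cnt Up D" using dyck_basic[OF assms(1)] assms by simp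
  have "up_pos D r \<le> length D" using up_pos_props(1)[OF assms(2) r] by simp
  then have "cnt Rt (take (up_pos D r) D) \<le> cnt Up (take (up_pos D r) D)"
    using assms(1) unfolding dyck_def by blast
  then show ?thesis using up_pos_props(3)[OF assms(2) r] unfolding up_x_def by simp
qed

lemma up_x_mono:
  assumes "dyck n D" "1 \<le> r" "r \<le> r'" "r' \<le> n"
  shows "up_x D r \<le> up_x D r'"
proof (cases "r = r'")
  case False
  then have "up_pos D r < up_pos D r'" using up_pos_mono[of r r' D] assms dyck_basic[OF assms(1)] by simp
  then show ?thesis unfolding up_x_def by (simp add: cnt_take_mono)
qed simp

lemma dyck_eq:
  assumes "dyck n D1" "dyck n D2" "\<And>r. 1 \<le> r \<Longrightarrow> r \<le> n \<Longrightarrow> up_x D1 r = up_x D2 r"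
  shows "D1 = D2"
proof -
  have key: "E2!k = Up" if E: "dyck n E1" "dyck n E2" "\<And>r. 1 \<le> r \<Longrightarrow> r \<le> n \<Longrightarrow> up_x E1 r = up_x E2 r"
    "k < 2*n" "E1!k = Up" for E1 E2 k
  proof -
    obtain r where r: "1 \<le> r" "r \<le> n" "up_pos E1 r = k"
      using up_pos_surj[of k E1] E dyck_basic[OF E(1)] by auto
    have "up_pos E2 r = k"
      using up_pos_up_x[of r E1] up_pos_up_x[of r E2] r E dyck_basic[OF E(1)] dyck_basic[OF E(2)]
      by simp
    then show ?thesis using up_pos_props(2)[of r E2] r dyck_basic[OF E(2)] by simp
  qed
  show ?thesis
  proof (rule nth_equalityI)
    show "length D1 = length D2" using dyck_basic assms by simp
    fix k assume "k < length D1"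
    then have k: "k < 2*n" using dyck_basic assms by simp
    show "D1!k = D2!k"
    proof (cases "D1!k")
      case Up then show ?thesis using key[OF assms(1,2) assms(3) k] by simp
    next
      case Rt
      have "D2!k \<noteq> Up"
      proof
        assume "D2!k = Up"
        then have "D1!k = Up" using key[OF assms(2,1) _ k] assms(3) by metis
        then show False using Rt by simp
      qed
      then show ?thesis using Rt by (cases "D2!k") auto
    qed
  qed
qed

lemma area_seq_eq:
  assumes "1 \<le> r" "r \<le> n"
  shows "area_seq n D r = r - 1 - up_x D r"
proof -
  have "{i. (i, r) \<in> area_set n D} = {up_x D r<..<r}"
    using assms unfolding area_set_def by auto
  then show ?thesis unfolding area_seq_def by simp
qed


section \<open>Area sequences and uniqueness of part listings\<close>

definition areaseq :: "nat \<Rightarrow> (nat \<Rightarrow> nat) \<Rightarrow> bool" where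
  "areaseq n w \<longleftrightarrow> w 1 = 0 \<and> (\<forall>r. 1 \<le> r \<longrightarrow> r < n \<longrightarrow> w (Suc r) \<le> Suc (w r))"

lemma area_seq_areaseq:
  assumes "dyck n D" "1 \<le> n"
  shows "areaseq n (area_seq n D)"
  unfolding areaseq_def
proof (intro conjI allI impI)
  show "area_seq n D 1 = 0" using area_seq_eq[of 1 n D] assms by simp
  fix r assume r: "1 \<le> r" "r < n"
  have "up_x D r \<le> up_x D (Suc r)" using up_x_mono[OF assms(1), of r "Suc r"] r by simp
  moreover have "up_x D r \<le> r - 1" using up_x_le[OF assms(1), of r] r by simp
  ultimately show "area_seq n D (Suc r) \<le> Suc (area_seq n D r)"
    using area_seq_eq[of r n D] area_seq_eq[of "Suc r" n D] r by simp
qed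

lemma areaseq_cross:
  assumes "areaseq n w" "1 \<le> p" "p < i" "i \<le> n" "w p < v" "v \<le> w i"
  shows "\<exists>s. p \<le> s \<and> s < i \<and> Suc (w s) = v"
  using assms(3-6)
proof (induct i rule: less_induct)
  case (less i)
  then obtain i' where i': "i = Suc i'" "p \<le> i'" by (cases i) auto
  have step: "w i \<le> Suc (w i')" using assms(1,2) i' less.prems unfolding areaseq_def by simp
  show ?case
  proof (cases "w i' < v")
    case True then show ?thesis using step less.prems i' by (intro exI[of _ i']) auto
  next
    case False
    then have "p < i'" using less.prems i' by (cases "p = i'") auto
    then show ?thesis using less.hyps[of i'] False less.prems i' by fastforce
  qed
qed

lemma areaseq_pred:
  assumes "areaseq n w" "1 \<le> i" "i \<le> n" "0 < w i"
  shows "\<exists>j. 1 \<le> j \<and> j < i \<and> Suc (w j) = w i"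
proof -
  have "w 1 = 0" using assms(1) unfolding areaseq_def by simp
  then have "1 < i" using assms by (cases "i = 1") auto
  then show ?thesis using areaseq_cross[OF assms(1), of 1 i "w i"] assms \<open>w 1 = 0\<close> by auto
qed

inductive lvl :: "(nat \<times> nat) set \<Rightarrow> nat \<Rightarrow> nat \<Rightarrow> bool" for R where
  lvl0: "lvl R 0 i"
| lvlS: "lvl R k j \<Longrightarrow> (j, i) \<in> R \<Longrightarrow> lvl R (Suc k) i"

lemma lvl_P1: "lvl (part_poset n w) k i \<Longrightarrow> k \<le> w i"
  by (induct rule: lvl.induct) (auto simp: part_poset_def)

lemma lvl_P2:
  assumes "areaseq n w" "1 \<le> i" "i \<le> n" "k \<le> w i"
  shows "lvl (part_poset n w) k i"
  using assms(2-4)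
proof (induct k arbitrary: i)
  case 0 show ?case by (rule lvl.lvl0)
next
  case (Suc k)
  then obtain j where j: "1 \<le> j" "j < i" "Suc (w j) = w i"
    using areaseq_pred[OF assms(1), of i] by auto
  have "(j, i) \<in> part_poset n w" using j Suc.prems unfolding part_poset_def by auto
  moreover have "lvl (part_poset n w) k j" using Suc j by simp
  ultimately show ?case using lvl.lvlS by blast
qed

definition isoF :: "nat \<Rightarrow> (nat \<Rightarrow> nat) \<Rightarrow> (nat \<times> nat) set \<Rightarrow> (nat \<times> nat) set \<Rightarrow> bool" where
  "isoF n f R S \<longleftrightarrow> bij_betw f {1..n} {1..n} \<and>
      (\<forall>i \<in> {1..n}. \<forall>j \<in> {1..n}. (i, j) \<in> R \<longleftrightarrow> (f i, f j) \<in> S)"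

lemma poset_iso_isoF: "poset_iso n R S \<longleftrightarrow> (\<exists>f. isoF n f R S)"
  unfolding poset_iso_def isoF_def by simp

lemma isoF_inv:
  assumes "isoF n f R S"
  shows "isoF n (inv_into {1..n} f) S R"
proof -
  have b: "bij_betw f {1..n} {1..n}" using assms unfolding isoF_def by simp
  have bi: "bij_betw (inv_into {1..n} f) {1..n} {1..n}" using bij_betw_inv_into[OF b] .
  show ?thesis unfolding isoF_def
  proof (intro conjI ballI bi)
    fix i j :: nat assume ij: "i \<in> {1..n}" "j \<in> {1..n}"
    have gi: "inv_into {1..n} f i \<in> {1..n}" "inv_into {1..n} f j \<in> {1..n}"
      using bi ij by (auto simp: bij_betw_def)
    have fi: "f (inv_into {1..n} f i) = i" "f (inv_into {1..n} f j) = j"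
      using b ij by (auto simp: bij_betw_def f_inv_into_f)
    show "(i, j) \<in> S \<longleftrightarrow> (inv_into {1..n} f i, inv_into {1..n} f j) \<in> R"
      using assms gi fi unfolding isoF_def by metis
  qed
qed

lemma isoF_comp:
  assumes "isoF n f R S" "isoF n g S T"
  shows "isoF n (g \<circ> f) R T"
proof -
  have fb: "bij_betw f {1..n} {1..n}" and gb: "bij_betw g {1..n} {1..n}"
    using assms unfolding isoF_def by auto
  have "(i, j) \<in> R \<longleftrightarrow> ((g \<circ> f) i, (g \<circ> f) j) \<in> T" if "i \<in> {1..n}" "j \<in> {1..n}" for i j
  proof -
    have "f i \<in> {1..n}" "f j \<in> {1..n}" using fb that by (auto simp: bij_betw_def)
    then show ?thesis using assms that unfolding isoF_def by simp
  qed
  then show ?thesis unfolding isoF_def using bij_betw_trans[OF fb gb] by blast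
qed

lemma lvl_iso:
  assumes "isoF n f R S" "R \<subseteq> {1..n} \<times> {1..n}" "lvl R k i" "i \<in> {1..n}"
  shows "lvl S k (f i)"
  using assms(3,4)
proof (induct rule: lvl.induct)
  case (lvl0 i) show ?case by (rule lvl.lvl0)
next
  case (lvlS k j i)
  then have j: "j \<in> {1..n}" using assms(2) by auto
  have "(f j, f i) \<in> S" using assms(1) lvlS j unfolding isoF_def by blast
  then show ?case using lvlS j by (intro lvl.lvlS[of S k "f j"]) auto
qed

lemma part_poset_sub: "part_poset n w \<subseteq> {1..n} \<times> {1..n}"
  unfolding part_poset_def by auto

lemma iso_level:
  assumes "areaseq n w1" "areaseq n w2" "isoF n f (part_poset n w1) (part_poset n w2)" "i \<in> {1..n}"
  shows "w2 (f i) = w1 i"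
proof -
  have le: "w1 i \<le> w2 (f i)" if "areaseq n w1" "areaseq n w2" "isoF n f (part_poset n w1) (part_poset n w2)"
    "i \<in> {1..n}" for w1 w2 f i
  proof -
    have fi: "f i \<in> {1..n}" using that unfolding isoF_def bij_betw_def by auto
    have "lvl (part_poset n w1) (w1 i) i" using lvl_P2[OF that(1), of i "w1 i"] that by auto
    then have "lvl (part_poset n w2) (w1 i) (f i)" using lvl_iso[OF that(3) part_poset_sub] that by auto
    then show ?thesis by (rule lvl_P1)
  qed
  let ?g = "inv_into {1..n} f"
  have b: "bij_betw f {1..n} {1..n}" using assms unfolding isoF_def by simp
  have fi: "f i \<in> {1..n}" "?g (f i) = i" using b assms(4) by (auto simp: bij_betw_def)
  have "w2 (f i) \<le> w1 (?g (f i))" using le[OF assms(2,1) isoF_inv[OF assms(3)] fi(1)] .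
  then show ?thesis using le[OF assms] fi by simp
qed

definition dcw :: "(nat \<Rightarrow> nat) \<Rightarrow> nat \<Rightarrow> nat" where
  "dcw w i = card {j. 1 \<le> j \<and> j < i \<and> Suc (w j) = w i}"

definition cntw :: "nat \<Rightarrow> (nat \<Rightarrow> nat) \<Rightarrow> nat \<Rightarrow> nat \<Rightarrow> nat" where
  "cntw n w k c = card {i. 1 \<le> i \<and> i \<le> n \<and> w i = k \<and> dcw w i \<le> c}"

lemma dcw_P:
  assumes "i \<le> n"
  shows "dcw w i = card {j \<in> {1..n}. (j, i) \<in> part_poset n w \<and> Suc (w j) = w i}"
proof -
  have "{j. 1 \<le> j \<and> j < i \<and> Suc (w j) = w i} = {j \<in> {1..n}. (j, i) \<in> part_poset n w \<and> Suc (w j) = w i}"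
  proof (intro equalityI subsetI)
    fix j assume "j \<in> {j. 1 \<le> j \<and> j < i \<and> Suc (w j) = w i}"
    then show "j \<in> {j \<in> {1..n}. (j, i) \<in> part_poset n w \<and> Suc (w j) = w i}"
      using assms unfolding part_poset_def by auto
  next
    fix j assume "j \<in> {j \<in> {1..n}. (j, i) \<in> part_poset n w \<and> Suc (w j) = w i}"
    then show "j \<in> {j. 1 \<le> j \<and> j < i \<and> Suc (w j) = w i}"
      unfolding part_poset_def by auto
  qed
  then show ?thesis unfolding dcw_def by simp
qed

lemma iso_dcw:
  assumes "areaseq n w1" "areaseq n w2" "isoF n f (part_poset n w1) (part_poset n w2)" "i \<in> {1..n}"
  shows "dcw w2 (f i) = dcw w1 i"
proof -
  have b: "bij_betw f {1..n} {1..n}" using assms unfolding isoF_def by simp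
  have fim: "f j \<in> {1..n}" if "j \<in> {1..n}" for j using b that by (auto simp: bij_betw_def)
  have iso: "(j, k) \<in> part_poset n w1 \<longleftrightarrow> (f j, f k) \<in> part_poset n w2" if "j \<in> {1..n}" "k \<in> {1..n}" for j k
    using assms(3) that unfolding isoF_def by blast
  have lev: "w2 (f j) = w1 j" if "j \<in> {1..n}" for j using iso_level[OF assms(1,2,3) that] .
  have fi: "f i \<in> {1..n}" using fim assms(4) .
  let ?A = "{j \<in> {1..n}. (j, i) \<in> part_poset n w1 \<and> Suc (w1 j) = w1 i}"
  let ?B = "{j \<in> {1..n}. (j, f i) \<in> part_poset n w2 \<and> Suc (w2 j) = w2 (f i)}"
  have img: "f ` ?A = ?B"
  proof (intro equalityI subsetI)
    fix y assume "y \<in> f ` ?A"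
    then obtain j where j: "j \<in> ?A" "y = f j" by auto
    then have "j \<in> {1..n}" "(j, i) \<in> part_poset n w1" "Suc (w1 j) = w1 i" by auto
    then show "y \<in> ?B" using j(2) fim iso[of j i] lev[of j] lev[of i] assms(4) by simp
  next
    fix y assume y: "y \<in> ?B"
    then have "y \<in> f ` {1..n}" using b unfolding bij_betw_def by auto
    then obtain j where j: "j \<in> {1..n}" "y = f j" by auto
    have "(j, i) \<in> part_poset n w1" using y j iso[of j i] assms(4) by simp
    moreover have "Suc (w1 j) = w1 i" using y j lev[of j] lev[of i] assms(4) by simp
    ultimately show "y \<in> f ` ?A" using j by blast
  qed
  have inj: "inj_on f ?A" by (rule inj_on_subset[OF bij_betw_imp_inj_on[OF b]]) auto
  have "card ?B = card ?A" unfolding img[symmetric] by (rule card_image[OF inj])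
  moreover have "dcw w1 i = card ?A" using dcw_P[of i n w1] assms(4) by simp
  moreover have "dcw w2 (f i) = card ?B" using dcw_P[of "f i" n w2] fi by simp
  ultimately show ?thesis by simp
qed

lemma iso_cntw:
  assumes "areaseq n w1" "areaseq n w2" "isoF n f (part_poset n w1) (part_poset n w2)"
  shows "cntw n w2 k c = cntw n w1 k c"
proof -
  have b: "bij_betw f {1..n} {1..n}" using assms unfolding isoF_def by simp
  have fim: "f j \<in> {1..n}" if "j \<in> {1..n}" for j using b that by (auto simp: bij_betw_def)
  have lev: "w2 (f j) = w1 j" if "j \<in> {1..n}" for j using iso_level[OF assms(1,2,3) that] .
  have dc: "dcw w2 (f j) = dcw w1 j" if "j \<in> {1..n}" for j using iso_dcw[OF assms(1,2,3) that] .
  let ?A = "{i. 1 \<le> i \<and> i \<le> n \<and> w1 i = k \<and> dcw w1 i \<le> c}"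
  let ?B = "{i. 1 \<le> i \<and> i \<le> n \<and> w2 i = k \<and> dcw w2 i \<le> c}"
  have img: "f ` ?A = ?B"
  proof (intro equalityI subsetI)
    fix y assume "y \<in> f ` ?A"
    then obtain j where j: "j \<in> ?A" "y = f j" by auto
    then have j1: "j \<in> {1..n}" by auto
    show "y \<in> ?B" using j fim[OF j1] lev[OF j1] dc[OF j1] by auto
  next
    fix y assume y: "y \<in> ?B"
    then have "y \<in> f ` {1..n}" using b unfolding bij_betw_def by auto
    then obtain j where j: "j \<in> {1..n}" "y = f j" by auto
    then show "y \<in> f ` ?A" using y lev[OF j(1)] dc[OF j(1)] by auto
  qed
  have inj: "inj_on f ?A" by (rule inj_on_subset[OF bij_betw_imp_inj_on[OF b]]) auto
  show ?thesis unfolding cntw_def img[symmetric] by (rule card_image[OF inj])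
qed

lemma first_diff:
  assumes "areaseq n w1" "areaseq n w2" "1 \<le> p" "p \<le> n"
    "\<And>j. 1 \<le> j \<Longrightarrow> j < p \<Longrightarrow> w1 j = w2 j" "w1 p < w2 p"
  shows "cntw n w1 (w2 p) (dcw w2 p) < cntw n w2 (w2 p) (dcw w2 p)"
proof -
  define v where "v = w2 p"
  define c where "c = dcw w2 p"
  define A0 where "A0 = {i. 1 \<le> i \<and> i < p \<and> w2 i = v \<and> dcw w2 i \<le> c}"
  have dc_eq: "dcw w1 i = dcw w2 i" if "1 \<le> i" "i < p" for i
  proof -
    have "w1 i = w2 i" using assms(5) that by simp
    moreover have "w1 j = w2 j" if "1 \<le> j" "j < i" for j using assms(5) that \<open>i < p\<close> by simp
    ultimately show ?thesis unfolding dcw_def by (intro arg_cong[where f=card]) auto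
  qed
  have C0: "{j. 1 \<le> j \<and> j < p \<and> Suc (w2 j) = v} = {j. 1 \<le> j \<and> j < p \<and> Suc (w1 j) = v}"
    using assms(5) by auto
  have sub1: "{i. 1 \<le> i \<and> i \<le> n \<and> w1 i = v \<and> dcw w1 i \<le> c} \<subseteq> A0"
  proof
    fix i assume i: "i \<in> {i. 1 \<le> i \<and> i \<le> n \<and> w1 i = v \<and> dcw w1 i \<le> c}"
    consider "i < p" | "i = p" | "p < i" by arith
    then show "i \<in> A0"
    proof cases
      case 1 then show ?thesis using i assms(5)[of i] dc_eq[of i] unfolding A0_def by auto
    next
      case 2 then show ?thesis using i assms(6) v_def by auto
    next
      case 3
      obtain s where s: "p \<le> s" "s < i" "Suc (w1 s) = v"
        using areaseq_cross[OF assms(1,3) 3, of v] i assms(6) v_def by auto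
      have "insert s {j. 1 \<le> j \<and> j < p \<and> Suc (w1 j) = v} \<subseteq> {j. 1 \<le> j \<and> j < i \<and> Suc (w1 j) = w1 i}"
        using s i assms(3) 3 by auto
      then have "card (insert s {j. 1 \<le> j \<and> j < p \<and> Suc (w1 j) = v}) \<le> dcw w1 i"
        unfolding dcw_def by (intro card_mono) auto
      moreover have "card (insert s {j. 1 \<le> j \<and> j < p \<and> Suc (w1 j) = v}) = Suc c"
        using s C0 unfolding c_def dcw_def v_def by (subst card_insert_disjoint) auto
      ultimately show ?thesis using i by simp
    qed
  qed
  have sub2: "insert p A0 \<subseteq> {i. 1 \<le> i \<and> i \<le> n \<and> w2 i = v \<and> dcw w2 i \<le> c}"
    using assms(3,4) unfolding A0_def v_def c_def by auto
  have fA0: "finite A0" unfolding A0_def by auto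
  have "card {i. 1 \<le> i \<and> i \<le> n \<and> w1 i = v \<and> dcw w1 i \<le> c} \<le> card A0"
    by (rule card_mono[OF fA0 sub1])
  also have "\<dots> < card (insert p A0)" using fA0 unfolding A0_def by (simp add: card_insert_disjoint)
  also have "\<dots> \<le> card {i. 1 \<le> i \<and> i \<le> n \<and> w2 i = v \<and> dcw w2 i \<le> c}"
    by (rule card_mono[OF _ sub2]) auto
  finally show ?thesis unfolding cntw_def v_def c_def .
qed

theorem iso_unique:
  assumes "areaseq n w1" "areaseq n w2" "poset_iso n (part_poset n w1) (part_poset n w2)"
  shows "\<forall>r. 1 \<le> r \<longrightarrow> r \<le> n \<longrightarrow> w1 r = w2 r"
proof (rule ccontr)
  assume "\<not> ?thesis"
  then have ex: "\<exists>r. 1 \<le> r \<and> r \<le> n \<and> w1 r \<noteq> w2 r" by auto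
  define p where "p = (LEAST r. 1 \<le> r \<and> r \<le> n \<and> w1 r \<noteq> w2 r)"
  have p: "1 \<le> p" "p \<le> n" "w1 p \<noteq> w2 p" using LeastI_ex[OF ex] unfolding p_def by auto
  have below: "w1 j = w2 j" if "1 \<le> j" "j < p" for j
    using not_less_Least[of j "\<lambda>r. 1 \<le> r \<and> r \<le> n \<and> w1 r \<noteq> w2 r"] that p unfolding p_def by auto
  obtain f where f: "isoF n f (part_poset n w1) (part_poset n w2)" using assms(3) poset_iso_isoF by auto
  have inv: "cntw n w2 k c = cntw n w1 k c" for k c by (rule iso_cntw[OF assms(1,2) f])
  show False
  proof (cases "w1 p < w2 p")
    case True
    then show False using first_diff[OF assms(1,2) p(1,2) below] inv by fastforce
  next
    case False
    then have "w2 p < w1 p" using p by simp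
    then show False using first_diff[OF assms(2,1) p(1,2)] below inv by fastforce
  qed
qed


lemma sl_pos:
  assumes "x \<in> set xs"
  shows "\<exists>q < length xs. sort_key key xs ! q = x"
proof -
  have "x \<in> set (sort_key key xs)" using assms by simp
  then obtain q where "q < length (sort_key key xs)" "sort_key key xs ! q = x"
    by (metis in_set_conv_nth)
  then show ?thesis by auto
qed

lemma sl_take_set:
  fixes key :: "'a \<Rightarrow> 'b::linorder"
  assumes "distinct xs" "inj_on key (set xs)" "q < length xs"
  shows "set (take q (sort_key key xs)) = {y \<in> set xs. key y < key (sort_key key xs ! q)}"
  using take_set_sorted[OF sorted_key_strict[OF assms(1,2)], of q] assms(3) by simp

lemma sl_cnt:
  fixes key :: "'a \<Rightarrow> 'b::linorder"
  assumes "distinct xs" "inj_on key (set xs)" "q < length xs"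
  shows "cnt s (take q (map lab (sort_key key xs))) = card {y \<in> set xs. key y < key (sort_key key xs ! q) \<and> lab y = s}"
proof -
  have "cnt s (take q (map lab (sort_key key xs))) = cnt s (map lab (take q (sort_key key xs)))"
    by (simp add: take_map)
  also have "\<dots> = card {y \<in> set (take q (sort_key key xs)). lab y = s}"
    using assms(1) by (intro cnt_map_distinct) (simp add: distinct_take)
  finally show ?thesis using sl_take_set[OF assms] by simp
qed

lemma sl_cnt_Suc:
  fixes key :: "'a \<Rightarrow> 'b::linorder"
  assumes "distinct xs" "inj_on key (set xs)" "q < length xs"
  shows "cnt s (take (Suc q) (map lab (sort_key key xs))) = card {y \<in> set xs. key y \<le> key (sort_key key xs ! q) \<and> lab y = s}"
proof -
  let ?S = "sort_key key xs"
  have q: "q < length ?S" using assms by simp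
  have "set (take (Suc q) ?S) = insert (?S!q) (set (take q ?S))"
    using take_Suc_conv_app_nth[OF q] by simp
  also have "\<dots> = {y \<in> set xs. key y \<le> key (?S ! q)}"
  proof -
    have mem: "?S!q \<in> set xs" using q by (metis nth_mem set_sort)
    have "y = ?S!q" if "y \<in> set xs" "key y = key (?S!q)" for y
      using assms(2) that mem by (auto dest: inj_onD)
    then show ?thesis using sl_take_set[OF assms] mem by (auto simp: order.order_iff_strict)
  qed
  finally have st: "set (take (Suc q) ?S) = {y \<in> set xs. key y \<le> key (?S ! q)}" .
  have "cnt s (take (Suc q) (map lab ?S)) = cnt s (map lab (take (Suc q) ?S))"
    by (simp add: take_map)
  also have "\<dots> = card {y \<in> set (take (Suc q) ?S). lab y = s}"
    using assms(1) by (intro cnt_map_distinct) (simp add: distinct_take)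
  finally show ?thesis using st by simp
qed

lemma dyck_local:
  assumes "length L = 2*n" "cnt Up L = n"
    "\<And>q. q < length L \<Longrightarrow> L!q = Rt \<Longrightarrow> cnt Rt (take (Suc q) L) \<le> cnt Up (take (Suc q) L)"
  shows "dyck n L"
proof -
  have "cnt Rt (take k L) \<le> cnt Up (take k L)" if "k \<le> length L" for k
    using that
  proof (induct k)
    case 0 then show ?case by (simp add: cnt_def)
  next
    case (Suc k)
    then have k: "k < length L" by simp
    have tk: "take (Suc k) L = take k L @ [L!k]" using take_Suc_conv_app_nth[OF k] .
    show ?case
    proof (cases "L!k")
      case Up then show ?thesis using Suc tk by (simp add: cnt_def)
    next
      case Rt then show ?thesis using assms(3)[OF k] by simp
    qed
  qed
  then show ?thesis unfolding dyck_def using assms by simp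
qed

definition rk :: "nat \<Rightarrow> (nat \<Rightarrow> 'b::linorder) \<Rightarrow> nat \<Rightarrow> nat" where
  "rk n k i = Suc (card {j \<in> {1..n}. k j < k i})"

lemma rk_less:
  assumes "inj_on k {1..n}" "i \<in> {1..n}" "j \<in> {1..n}" "k i < k j"
  shows "rk n k i < rk n k j"
proof -
  have "insert i {l \<in> {1..n}. k l < k i} \<subseteq> {l \<in> {1..n}. k l < k j}" using assms by auto
  then have "card (insert i {l \<in> {1..n}. k l < k i}) \<le> card {l \<in> {1..n}. k l < k j}"
    by (intro card_mono) auto
  then show ?thesis unfolding rk_def by (simp add: card_insert_disjoint)
qed

lemma rk_range:
  assumes "i \<in> {1..n}"
  shows "rk n k i \<in> {1..n}"
proof -
  have "{j \<in> {1..n}. k j < k i} \<subseteq> {1..n} - {i}" by auto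
  then have "card {j \<in> {1..n}. k j < k i} \<le> card ({1..n} - {i})" by (intro card_mono) auto
  then show ?thesis using assms unfolding rk_def by auto
qed

lemma rk_bij:
  fixes k :: "nat \<Rightarrow> 'b::linorder"
  assumes "inj_on k {1..n}"
  shows "bij_betw (rk n k) {1..n} {1..n}"
proof -
  have inj: "inj_on (rk n k) {1..n}"
  proof (rule inj_onI)
    fix i j assume ij: "i \<in> {1..n}" "j \<in> {1..n}" "rk n k i = rk n k j"
    show "i = j"
    proof (rule ccontr)
      assume "i \<noteq> j"
      then have "k i \<noteq> k j" using assms ij by (auto dest: inj_onD)
      then have "k i < k j \<or> k j < k i" by auto
      then show False using rk_less[OF assms] ij by fastforce
    qed
  qed
  have "rk n k ` {1..n} \<subseteq> {1..n}" using rk_range by blast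
  then have "rk n k ` {1..n} = {1..n}" using endo_inj_surj[OF _ _ inj] by simp
  then show ?thesis using inj unfolding bij_betw_def by simp
qed

lemma rk_downclosed:
  fixes k :: "nat \<Rightarrow> 'b::linorder"
  assumes "inj_on k {1..n}" "A \<subseteq> {1..n}"
    "\<And>i j. i \<in> A \<Longrightarrow> j \<in> {1..n} \<Longrightarrow> k j \<le> k i \<Longrightarrow> j \<in> A" "i \<in> {1..n}"
  shows "i \<in> A \<longleftrightarrow> rk n k i \<le> card A"
proof
  assume iA: "i \<in> A"
  have "insert i {j \<in> {1..n}. k j < k i} \<subseteq> A" using assms(3)[OF iA] iA by auto
  then have "card (insert i {j \<in> {1..n}. k j < k i}) \<le> card A"
    by (intro card_mono) (use assms(2) finite_subset in auto)
  then show "rk n k i \<le> card A" unfolding rk_def by (simp add: card_insert_disjoint)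
next
  assume le: "rk n k i \<le> card A"
  show "i \<in> A"
  proof (rule ccontr)
    assume "i \<notin> A"
    then have "A \<subseteq> {j \<in> {1..n}. k j < k i}" using assms(2,3,4) by (auto simp: not_less[symmetric])
    then have "card A \<le> card {j \<in> {1..n}. k j < k i}" by (intro card_mono) auto
    then show False using le unfolding rk_def by simp
  qed
qed


section \<open>The word of a sequence\<close>

definition items :: "nat \<Rightarrow> (nat \<times> step) list" where
  "items n = map (\<lambda>i. (i, Up)) [1..<n+1] @ map (\<lambda>i. (i, Rt)) [1..<n+1]"

definition kw :: "(nat \<Rightarrow> nat) \<Rightarrow> nat \<times> step \<Rightarrow> nat \<times> nat" where
  "kw w y = (if snd y = Up then (w (fst y), fst y) else (Suc (w (fst y)), fst y))"

definition word :: "nat \<Rightarrow> (nat \<Rightarrow> nat) \<Rightarrow> step list" where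
  "word n w = map snd (sort_key (kw w) (items n))"

lemma kw_Up[simp]: "kw w (j, Up) = (w j, j)" and kw_Rt[simp]: "kw w (j, Rt) = (Suc (w j), j)"
  unfolding kw_def by auto

lemma items_distinct: "distinct (items n)"
  unfolding items_def by (auto simp: distinct_map inj_on_def)

lemma items_set: "set (items n) = {y. fst y \<in> {1..n}}"
proof -
  have "y \<in> set (items n)" if "fst y \<in> {1..n}" for y
  proof -
    obtain a b where y: "y = (a, b)" by (cases y)
    have a: "a \<in> set [1..<n+1]" using that y by auto
    show ?thesis
    proof (cases b)
      case Up
      then have "y \<in> set (map (\<lambda>i. (i, Up)) [1..<n+1])" using a y by auto
      then show ?thesis unfolding items_def by simp
    next
      case Rt
      then have "y \<in> set (map (\<lambda>i. (i, Rt)) [1..<n+1])" using a y by auto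
      then show ?thesis unfolding items_def by simp
    qed
  qed
  moreover have "set (items n) \<subseteq> {y. fst y \<in> {1..n}}" unfolding items_def by auto
  ultimately show ?thesis by blast
qed

lemma items_length: "length (items n) = 2 * n"
  unfolding items_def by simp

lemma kw_inj: "inj_on (kw w) A"
proof (rule inj_onI)
  fix x y assume "kw w x = kw w y"
  then show "x = y" unfolding kw_def
    by (cases x; cases y; cases "snd x"; cases "snd y") (auto split: if_splits)
qed

lemma card_items:
  "card {y \<in> set (items n). P y \<and> snd y = s} = card {j \<in> {1..n}. P (j, s)}"
proof -
  have "{y \<in> set (items n). P y \<and> snd y = s} = (\<lambda>j. (j, s)) ` {j \<in> {1..n}. P (j, s)}"
    unfolding items_set by force
  moreover have "inj_on (\<lambda>j. (j, s)) {j \<in> {1..n}. P (j, s)}" by (auto simp: inj_on_def)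
  ultimately show ?thesis by (simp add: card_image)
qed

lemma word_length: "length (word n w) = 2 * n"
  unfolding word_def by (simp add: items_length)

lemma word_cnt_Up: "cnt Up (word n w) = n"
proof -
  have "cnt Up (word n w) = card {y \<in> set (sort_key (kw w) (items n)). snd y = Up}"
    unfolding word_def by (rule cnt_map_distinct) (simp add: items_distinct)
  also have "\<dots> = card {y \<in> set (items n). True \<and> snd y = Up}" by simp
  also have "\<dots> = card {j \<in> {1..n}. True}" unfolding card_items by simp
  also have "{j \<in> {1..n}. True} = {1..n}" by blast
  also have "card {1..n} = n" by simp
  finally show ?thesis .
qed

lemma word_dyck: "dyck n (word n w)"
proof (rule dyck_local[OF word_length word_cnt_Up])
  fix q assume q: "q < length (word n w)" "word n w ! q = Rt"
  let ?S = "sort_key (kw w) (items n)"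
  have ql: "q < length (items n)" using q word_length[of n w] items_length[of n] by simp
  have y: "?S ! q \<in> set (items n)" using ql by (metis length_sort nth_mem set_sort)
  have sy: "snd (?S ! q) = Rt" using q ql unfolding word_def by simp
  obtain i where i: "?S ! q = (i, Rt)" using sy by (cases "?S ! q") auto
  have "cnt Rt (take (Suc q) (word n w)) = card {j \<in> {1..n}. kw w (j, Rt) \<le> kw w (?S ! q)}"
    unfolding word_def sl_cnt_Suc[OF items_distinct kw_inj ql] card_items ..
  also have "\<dots> \<le> card {j \<in> {1..n}. kw w (j, Up) \<le> kw w (?S ! q)}"
  proof (rule card_mono)
    show "{j \<in> {1..n}. kw w (j, Rt) \<le> kw w (?S ! q)} \<subseteq> {j \<in> {1..n}. kw w (j, Up) \<le> kw w (?S ! q)}"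
    proof
      fix j assume a: "j \<in> {j \<in> {1..n}. kw w (j, Rt) \<le> kw w (?S ! q)}"
      have "(w j, j) \<le> (Suc (w j), j)" by (simp add: less_eq_prod_def)
      then have "kw w (j, Up) \<le> kw w (j, Rt)" by simp
      then have "kw w (j, Up) \<le> kw w (?S ! q)" using a by (blast intro: order_trans)
      then show "j \<in> {j \<in> {1..n}. kw w (j, Up) \<le> kw w (?S ! q)}" using a by blast
    qed
  qed simp
  also have "\<dots> = cnt Up (take (Suc q) (word n w))"
    unfolding word_def sl_cnt_Suc[OF items_distinct kw_inj ql] card_items ..
  finally show "cnt Rt (take (Suc q) (word n w)) \<le> cnt Up (take (Suc q) (word n w))" .
qed

lemma word_up_x:
  assumes "i \<in> {1..n}"
  shows "up_x (word n w) (rk n (\<lambda>j. (w j, j)) i) = card {j \<in> {1..n}. (Suc (w j), j) < (w i, i)}"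
proof -
  let ?S = "sort_key (kw w) (items n)"
  have "(i, Up) \<in> set (items n)" using assms items_set by auto
  then obtain q where q: "q < length (items n)" "?S ! q = (i, Up)" using sl_pos by metis
  have ql: "q < length (word n w)" using q word_length items_length by simp
  have Lq: "word n w ! q = Up" using q unfolding word_def by simp
  have "cnt Up (take q (word n w)) = card {j \<in> {1..n}. kw w (j, Up) < kw w (i, Up)}"
    unfolding word_def sl_cnt[OF items_distinct kw_inj q(1)] card_items q(2) ..
  also have "\<dots> = rk n (\<lambda>j. (w j, j)) i - 1" unfolding rk_def by simp
  finally have "up_pos (word n w) (rk n (\<lambda>j. (w j, j)) i) = q"
    using up_pos_char[OF ql Lq] unfolding rk_def by simp
  then have "up_x (word n w) (rk n (\<lambda>j. (w j, j)) i) = cnt Rt (take q (word n w))"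
    unfolding up_x_def by simp
  also have "\<dots> = card {j \<in> {1..n}. kw w (j, Rt) < kw w (i, Up)}"
    unfolding word_def sl_cnt[OF items_distinct kw_inj q(1)] card_items q(2) ..
  finally show ?thesis by simp
qed


section \<open>The zeta map equals the word of the area sequence\<close>

definition retn :: "nat \<Rightarrow> (nat \<Rightarrow> nat) \<Rightarrow> nat \<Rightarrow> nat" where
  "retn n w i = (LEAST j. i < j \<and> (n < j \<or> w j \<le> w i)) - 1"

lemma ret_props:
  assumes "i \<in> {1..n}"
  shows "i \<le> retn n w i" "retn n w i \<le> n" "\<And>j. i < j \<Longrightarrow> j \<le> retn n w i \<Longrightarrow> w i < w j"
    "retn n w i < n \<Longrightarrow> w (Suc (retn n w i)) \<le> w i"
proof -
  let ?P = "\<lambda>j. i < j \<and> (n < j \<or> w j \<le> w i)"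
  define m where "m = (LEAST j. ?P j)"
  let ?m = m
  have Pn: "?P (Suc n)" using assms by auto
  have Pm: "?P ?m" using LeastI[of ?P, OF Pn] unfolding m_def .
  have mle: "?m \<le> Suc n" using Least_le[of ?P, OF Pn] unfolding m_def .
  have r: "retn n w i = ?m - 1" unfolding retn_def m_def by simp
  show "i \<le> retn n w i" using Pm r by linarith
  show "retn n w i \<le> n" using mle r by linarith
  show "w i < w j" if "i < j" "j \<le> retn n w i" for j
  proof -
    have "j < ?m" using that r Pm by linarith
    then have "\<not> ?P j" unfolding m_def by (rule not_less_Least)
    then show ?thesis using that r mle by auto
  qed
  show "w (Suc (retn n w i)) \<le> w i" if "retn n w i < n"
  proof -
    have "?m \<le> n" using that r Pm by linarith
    moreover have "Suc (retn n w i) = ?m" using r Pm by linarith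
    ultimately show ?thesis using Pm by auto
  qed
qed

lemma ret_lt:
  assumes "i < i'" "i' \<le> n" "w i' \<le> w i"
  shows "retn n w i < i'"
proof -
  let ?P = "\<lambda>j. i < j \<and> (n < j \<or> w j \<le> w i)"
  have "?P i'" using assms by auto
  then have "(LEAST j. ?P j) \<le> i'" by (rule Least_le)
  moreover have "i < (LEAST j. ?P j)" using LeastI[of ?P, OF \<open>?P i'\<close>] by simp
  ultimately show ?thesis unfolding retn_def by simp
qed

definition kzp :: "nat \<Rightarrow> (nat \<Rightarrow> nat) \<Rightarrow> nat \<times> step \<Rightarrow> nat \<times> nat" where
  "kzp n w x = (if snd x = Up then (w (fst x), retn n w (fst x) - w (fst x))
                else (Suc (w (fst x)), fst x - Suc (w (fst x))))"

lemma kzp_Up[simp]: "kzp n w (j, Up) = (w j, retn n w j - w j)"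
  and kzp_Rt[simp]: "kzp n w (j, Rt) = (Suc (w j), j - Suc (w j))"
  unfolding kzp_def by auto

lemma kzp_mono:
  assumes wl: "\<And>r. r \<in> {1..n} \<Longrightarrow> w r < r"
    and a: "a \<in> {1..n}" and b: "b \<in> {1..n}" and lt: "kw w (a, s) < kw w (b, t)"
  shows "kzp n w (a, s) < kzp n w (b, t)"
proof -
  note ra = ret_props[OF a, where w=w] and rb = ret_props[OF b, where w=w]
  have wa: "w a < a" and wb: "w b < b" using wl a b by auto
  show ?thesis
  proof (cases s)
    case Up note s = this
    show ?thesis
    proof (cases t)
      case Up
      show ?thesis
      proof (cases "w a < w b")
        case True then show ?thesis using s Up by simp
      next
        case False
        then have eq: "w a = w b" "a < b" using lt s Up by auto
        have "retn n w a < b" using ret_lt[of a b n w] eq b by simp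
        then show ?thesis using s Up eq ra(1) rb(1) wa by simp
      qed
    next
      case Rt
      show ?thesis
      proof (cases "w a < Suc (w b)")
        case True then show ?thesis using s Rt by simp
      next
        case False
        then have eq: "w a = Suc (w b)" "a < b" using lt s Rt by auto
        have "retn n w a < b"
        proof (rule ccontr)
          assume "\<not> retn n w a < b"
          then have "w a < w b" using ra(3)[of b] eq by simp
          then show False using eq by simp
        qed
        then show ?thesis using s Rt eq ra(1) wa wb by simp
      qed
    qed
  next
    case Rt note s = this
    show ?thesis
    proof (cases t)
      case Up
      show ?thesis
      proof (cases "Suc (w a) < w b")
        case True then show ?thesis using s Up by simp
      next
        case False
        then have eq: "Suc (w a) = w b" "a < b" using lt s Up by auto
        then show ?thesis using s Up eq rb(1) wa by simp
      qed
    next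
      case Rt
      show ?thesis
      proof (cases "w a < w b")
        case True then show ?thesis using s Rt by simp
      next
        case False
        then have eq: "w a = w b" "a < b" using lt s Rt by auto
        then show ?thesis using s Rt wa by simp
      qed
    qed
  qed
qed

lemma kzp_mono':
  assumes wl: "\<And>r. r \<in> {1..n} \<Longrightarrow> w r < r"
    and x: "x \<in> set (items n)" and y: "y \<in> set (items n)" and lt: "kw w x < kw w y"
  shows "kzp n w x < kzp n w y"
  using kzp_mono[OF wl, where a="fst x" and b="fst y" and s="snd x" and t="snd y"] x y lt items_set by auto

lemma kzp_iff:
  assumes wl: "\<And>r. r \<in> {1..n} \<Longrightarrow> w r < r"
    and x: "x \<in> set (items n)" and y: "y \<in> set (items n)"
  shows "kzp n w x < kzp n w y \<longleftrightarrow> kw w x < kw w y"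
proof
  assume "kw w x < kw w y" then show "kzp n w x < kzp n w y" using kzp_mono'[OF wl x y] by blast
next
  assume a: "kzp n w x < kzp n w y"
  show "kw w x < kw w y"
  proof (rule ccontr)
    assume "\<not> kw w x < kw w y"
    then have "kw w y < kw w x \<or> kw w y = kw w x" by auto
    then show False
    proof
      assume "kw w y < kw w x"
      then show False using kzp_mono'[OF wl y x] a by simp
    next
      assume "kw w y = kw w x"
      then have "x = y" using kw_inj[of w UNIV] by (auto dest: inj_onD)
      then show False using a by simp
    qed
  qed
qed

lemma kzp_inj:
  assumes wl: "\<And>r. r \<in> {1..n} \<Longrightarrow> w r < r"
  shows "inj_on (kzp n w) (set (items n))"
proof (rule inj_onI)
  fix x y assume x: "x \<in> set (items n)" and y: "y \<in> set (items n)" and e: "kzp n w x = kzp n w y"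
  show "x = y"
  proof (rule ccontr)
    assume "x \<noteq> y"
    then have "kw w x \<noteq> kw w y" using kw_inj[of w UNIV] by (auto dest: inj_onD)
    then have "kw w x < kw w y \<or> kw w y < kw w x" by auto
    then show False using kzp_mono'[OF wl x y] kzp_mono'[OF wl y x] e by auto
  qed
qed


definition gz :: "nat \<Rightarrow> (nat \<Rightarrow> nat) \<Rightarrow> nat \<times> step \<Rightarrow> nat" where
  "gz n w x = (if snd x = Up then retn n w (fst x) + (retn n w (fst x) - w (fst x))
               else fst x + (fst x - Suc (w (fst x))))"

definition kz :: "step list \<Rightarrow> nat \<Rightarrow> nat \<times> nat" where
  "kz D t = (pt_y D t - pt_x D t, pt_x D t)"

lemma w_facts:
  assumes "dyck n D" "r \<in> {1..n}"
  shows "area_seq n D r < r" "up_x D r = r - Suc (area_seq n D r)"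
  using area_seq_eq[of r n D] up_x_le[OF assms(1), of r] assms(2) by auto

lemma cnt_snoc: "cnt s (xs @ [x]) = cnt s xs + (if x = s then 1 else 0)"
  unfolding cnt_def by simp

lemma g_Rt:
  assumes dy: "dyck n D" and r: "r \<in> {1..n}"
  defines "t \<equiv> gz n (area_seq n D) (r, Rt)"
  shows "t \<in> {1..2*n}" "swap_step (D ! (t - 1)) = Rt" "kz D t = kzp n (area_seq n D) (r, Rt)"
proof -
  note db = dyck_basic[OF dy]
  have r1: "1 \<le> r" "r \<le> cnt Up D" using r db by auto
  have u: "up_x D r = r - Suc (area_seq n D r)" "area_seq n D r < r" using w_facts[OF dy r] by auto
  have tt: "t = Suc (up_pos D r)" unfolding t_def gz_def using up_pos_up_x[OF r1] u r by simp
  have pl: "up_pos D r < length D" and pu: "D ! up_pos D r = Up" and pc: "cnt Up (take (up_pos D r) D) = r - 1"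
    using up_pos_props[OF r1] by auto
  show "t \<in> {1..2*n}" using tt pl db by simp
  show "swap_step (D ! (t - 1)) = Rt" using tt pu by simp
  have "take t D = take (up_pos D r) D @ [D ! up_pos D r]"
    using tt take_Suc_conv_app_nth[OF pl] by simp
  then have py: "pt_y D t = r" unfolding pt_y_def using pc pu r1 cnt_snoc by simp
  have px: "pt_x D t = t - r" using pt_x_pt_y[of t D] py tt pl by simp
  show "kz D t = kzp n (area_seq n D) (r, Rt)"
    unfolding kz_def using py px tt up_pos_up_x[OF r1] u by simp
qed

lemma g_Up:
  assumes dy: "dyck n D" and i: "i \<in> {1..n}"
  defines "t \<equiv> gz n (area_seq n D) (i, Up)"
  shows "t \<in> {1..2*n}" "swap_step (D ! (t - 1)) = Up" "kz D t = kzp n (area_seq n D) (i, Up)"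
proof -
  note db = dyck_basic[OF dy]
  define w where "w = area_seq n D"
  define Y where "Y = retn n w i"
  define X where "X = Y - w i"
  note rp = ret_props[OF i, where w=w, folded Y_def]
  have wi: "w i < i" using w_facts[OF dy i] unfolding w_def by simp
  have tt: "t = Y + X" unfolding t_def gz_def Y_def X_def w_def by simp
  have Y1: "1 \<le> Y" "Y \<le> n" "i \<le> Y" using rp i by auto
  have X1: "1 \<le> X" "X \<le> n" using wi Y1 unfolding X_def by auto
  have uY: "up_x D Y < X"
  proof -
    have "w i \<le> w Y" using rp(3)[of Y] Y1 by (cases "i = Y") auto
    moreover have "up_x D Y = Y - Suc (w Y)" using w_facts[OF dy, of Y] Y1 unfolding w_def by simp
    ultimately show ?thesis unfolding X_def using wi Y1 by simp
  qed
  have uY1: "X \<le> up_x D (Suc Y)" if "Y < n"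
  proof -
    have "w (Suc Y) \<le> w i" using rp(4) that by simp
    moreover have "up_x D (Suc Y) = Suc Y - Suc (w (Suc Y))" using w_facts[OF dy, of "Suc Y"] that
      unfolding w_def by simp
    ultimately show ?thesis unfolding X_def by simp
  qed
  have low: "up_pos D r + 1 < t" if "1 \<le> r" "r \<le> Y" for r
  proof -
    have "up_x D r \<le> up_x D Y" using up_x_mono[OF dy, of r Y] that Y1 by simp
    moreover have "up_pos D r = up_x D r + (r - 1)" using up_pos_up_x[of r D] that Y1 db by simp
    ultimately show ?thesis using uY tt that X1 by simp
  qed
  have high: "t \<le> up_pos D r" if "Y < r" "r \<le> n" for r
  proof -
    have "up_x D (Suc Y) \<le> up_x D r" using up_x_mono[OF dy, of "Suc Y" r] that by simp
    moreover have "up_pos D r = up_x D r + (r - 1)" using up_pos_up_x[of r D] that Y1 db by simp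
    ultimately show ?thesis using uY1 tt that by simp
  qed
  have tl: "t \<le> length D" using tt Y1 X1 db by simp
  have set_eq: "{r. 1 \<le> r \<and> r \<le> cnt Up D \<and> up_pos D r < t'} = {1..Y}" if "t' = t \<or> t' = t - 1" for t'
  proof (intro equalityI subsetI)
    fix r assume "r \<in> {r. 1 \<le> r \<and> r \<le> cnt Up D \<and> up_pos D r < t'}"
    then show "r \<in> {1..Y}" using high[of r] that db by (cases "r \<le> Y") auto
  next
    fix r assume "r \<in> {1..Y}"
    then show "r \<in> {r. 1 \<le> r \<and> r \<le> cnt Up D \<and> up_pos D r < t'}" using low[of r] that db Y1 by auto
  qed
  have py: "pt_y D t = Y" using pt_y_card[OF tl] set_eq[of t] by simp
  have py1: "pt_y D (t - 1) = Y" using pt_y_card[of "t - 1" D] tl set_eq[of "t - 1"] by simp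
  have "D ! (t - 1) \<noteq> Up" using pt_step[of t D] tl py py1 tt Y1 by simp
  then have "D ! (t - 1) = Rt" by (cases "D ! (t - 1)") auto
  then show "swap_step (D ! (t - 1)) = Up" by simp
  show "t \<in> {1..2*n}" using tt Y1 X1 by simp
  have px: "pt_x D t = X" using pt_x_pt_y[OF tl] py tt by simp
  show "kz D t = kzp n (area_seq n D) (i, Up)"
    unfolding kz_def using px py tt wi Y1 unfolding X_def Y_def w_def[symmetric] by simp
qed

lemma zeta_word:
  assumes dy: "dyck n D"
  shows "zeta D = word n (area_seq n D)"
proof -
  define w where "w = area_seq n D"
  define S where "S = sort_key (kw w) (items n)"
  note db = dyck_basic[OF dy]
  have wl: "\<And>r. r \<in> {1..n} \<Longrightarrow> w r < r" using w_facts[OF dy] unfolding w_def by simp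
  have gfacts: "gz n w x \<in> {1..2*n}" "swap_step (D ! (gz n w x - 1)) = snd x" "kz D (gz n w x) = kzp n w x"
    if "x \<in> set (items n)" for x
  proof -
    obtain a s where x: "x = (a, s)" by (cases x)
    have a: "a \<in> {1..n}" using that x items_set by auto
    show "gz n w x \<in> {1..2*n}" "swap_step (D ! (gz n w x - 1)) = snd x" "kz D (gz n w x) = kzp n w x"
      using g_Up[OF dy a] g_Rt[OF dy a] x unfolding w_def by (cases s; simp)+
  qed
  have ginj: "inj_on (gz n w) (set (items n))"
  proof (rule inj_onI)
    fix x y assume xy: "x \<in> set (items n)" "y \<in> set (items n)" "gz n w x = gz n w y"
    then have "kzp n w x = kzp n w y" using gfacts[of x] gfacts[of y] by metis
    then show "x = y" using kzp_inj[OF wl] xy by (auto dest: inj_onD)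
  qed
  have gimg: "gz n w ` set (items n) = {1..2*n}"
  proof (rule card_subset_eq)
    show "gz n w ` set (items n) \<subseteq> {1..2*n}" using gfacts by blast
    have "card (gz n w ` set (items n)) = card (set (items n))" using card_image[OF ginj] .
    also have "\<dots> = 2*n" using distinct_card[OF items_distinct] items_length by simp
    finally show "card (gz n w ` set (items n)) = card {1..2*n}" by simp
  qed simp
  have setS: "set S = set (items n)" unfolding S_def by simp
  have sk: "sort_key (kz D) [1..<length D + 1] = map (gz n w) S"
  proof (rule sort_key_inj_key_eq)
    have "distinct (map (gz n w) S)" using ginj setS items_distinct unfolding S_def
      by (simp add: distinct_map)
    moreover have "set [1..<length D + 1] = set (map (gz n w) S)" using gimg setS db by auto
    ultimately show "mset [1..<length D + 1] = mset (map (gz n w) S)"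
      using set_eq_iff_mset_eq_distinct[of "[1..<length D + 1]" "map (gz n w) S"] by simp
    show "inj_on (kz D) (set [1..<length D + 1])"
    proof (rule inj_onI)
      fix t t' assume tt: "t \<in> set [1..<length D + 1]" "t' \<in> set [1..<length D + 1]" "kz D t = kz D t'"
      then have "t \<in> gz n w ` set (items n)" "t' \<in> gz n w ` set (items n)" using gimg db by auto
      then obtain x y where xy: "x \<in> set (items n)" "y \<in> set (items n)" "t = gz n w x" "t' = gz n w y"
        by blast
      then have "kzp n w x = kzp n w y" using gfacts[of x] gfacts[of y] tt(3) by metis
      then have "x = y" using kzp_inj[OF wl] xy by (auto dest: inj_onD)
      then show "t = t'" using xy by simp
    qed
    have meq: "map (kz D) (map (gz n w) S) = map (kzp n w) S"
      using gfacts setS by simp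
    have "sorted (map (kzp n w) S)"
    proof -
      have "sorted_wrt (<) (map (kw w) S)" unfolding S_def
        by (rule sorted_key_strict[OF items_distinct kw_inj])
      then have "sorted_wrt (\<lambda>x y. kw w x < kw w y) S" by (simp add: sorted_wrt_map)
      then have "sorted_wrt (\<lambda>x y. kzp n w x \<le> kzp n w y) S"
        by (rule sorted_wrt_mono_rel[rotated]) (use kzp_mono'[OF wl] setS in \<open>auto intro: less_imp_le\<close>)
      then show ?thesis by (simp add: sorted_wrt_map)
    qed
    then show "sorted (map (kz D) (map (gz n w) S))" unfolding meq .
  qed
  have kzeq: "kz D = (\<lambda>t. (pt_y D t - pt_x D t, pt_x D t))" by (rule ext) (simp add: kz_def)
  have "zeta D = map (\<lambda>t. swap_step (D ! (t - 1))) (sort_key (kz D) [1..<length D + 1])"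
    unfolding zeta_def kzeq by (rule refl)
  also have "\<dots> = map (\<lambda>t. swap_step (D ! (t - 1))) (map (gz n w) S)" unfolding sk ..
  also have "\<dots> = map snd S" using gfacts setS by simp
  finally show ?thesis unfolding word_def S_def w_def .
qed


definition Gr :: "nat \<Rightarrow> step list \<Rightarrow> (nat \<times> nat) set" where
  "Gr n E = {(a, j). 1 \<le> a \<and> a < j \<and> j \<le> n \<and> (a, j) \<notin> area_set n E}"

lemma Gr_mem: "(a, j) \<in> Gr n E \<longleftrightarrow> 1 \<le> a \<and> a < j \<and> j \<le> n \<and> a \<le> up_x E j"
  unfolding Gr_def area_set_def by auto

definition monor :: "nat \<Rightarrow> (nat \<times> nat) set \<Rightarrow> bool" where
  "monor n R \<longleftrightarrow> R \<subseteq> {(i, j). 1 \<le> i \<and> i < j \<and> j \<le> n} \<and>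
     (\<forall>i j i' j'. (i, j) \<in> R \<longrightarrow> 1 \<le> i' \<longrightarrow> i' \<le> i \<longrightarrow> j \<le> j' \<longrightarrow> j' \<le> n \<longrightarrow> (i', j') \<in> R)"

lemma uio_monor:
  assumes "unit_interval_order n U"
  shows "monor n U"
proof -
  obtain x :: "nat \<Rightarrow> real" where sm: "strict_mono_on {1..n} x"
    and U: "U = {(i, j). i \<in> {1..n} \<and> j \<in> {1..n} \<and> x i + 1 < x j}"
    using assms unfolding unit_interval_order_def by blast
  have le: "x i \<le> x j" if "i \<in> {1..n}" "j \<in> {1..n}" "i \<le> j" for i j
    using sm that unfolding strict_mono_on_def by (cases "i = j") (auto intro: less_imp_le)
  have lt: "i < j" if "i \<in> {1..n}" "j \<in> {1..n}" "x i + 1 < x j" for i j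
  proof (rule ccontr)
    assume "\<not> i < j"
    then have "x j \<le> x i" using le[of j i] that by simp
    then show False using that by simp
  qed
  show ?thesis unfolding monor_def
  proof (intro conjI allI impI)
    show "U \<subseteq> {(i, j). 1 \<le> i \<and> i < j \<and> j \<le> n}" using lt unfolding U by auto
    fix i j i' j' assume a: "(i, j) \<in> U" "1 \<le> i'" "i' \<le> i" "j \<le> j'" "j' \<le> n"
    then have "i \<in> {1..n}" "j \<in> {1..n}" "x i + 1 < x j" unfolding U by auto
    moreover have "x i' \<le> x i" "x j \<le> x j'" using le[of i' i] le[of j j'] a calculation by auto
    ultimately show "(i', j') \<in> U" unfolding U using a by auto
  qed
qed

lemma Gr_monor:
  assumes dy: "dyck n E"
  shows "monor n (Gr n E)"
  unfolding monor_def
proof (intro conjI allI impI)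
  show "Gr n E \<subseteq> {(i, j). 1 \<le> i \<and> i < j \<and> j \<le> n}" unfolding Gr_def by auto
  fix i j i' j' assume a: "(i, j) \<in> Gr n E" "1 \<le> i'" "i' \<le> i" "j \<le> j'" "j' \<le> n"
  then have "i \<le> up_x E j" "1 \<le> i" "i < j" by (auto simp: Gr_mem)
  moreover have "up_x E j \<le> up_x E j'" using up_x_mono[OF dy, of j j'] a calculation by simp
  moreover have "up_x E j' \<le> j' - 1" using up_x_le[OF dy, of j'] a calculation by simp
  ultimately show "(i', j') \<in> Gr n E" using a by (auto simp: Gr_mem)
qed

lemma dyck_area_eq:
  assumes "dyck n E1" "dyck n E2" "area_seq n E1 = area_seq n E2"
  shows "E1 = E2"
proof (rule dyck_eq[OF assms(1,2)])
  fix r assume "1 \<le> r" "r \<le> n"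
  then show "up_x E1 r = up_x E2 r"
    using w_facts[OF assms(1), of r] w_facts[OF assms(2), of r] assms(3) by simp
qed

lemma a_map_Gr:
  assumes dy: "dyck n E"
  shows "a_map n (Gr n E) = E"
  unfolding a_map_def
proof (rule the_equality)
  have "area_set n E = {(i, j). 1 \<le> i \<and> i < j \<and> j \<le> n \<and> (i, j) \<notin> Gr n E}"
    unfolding Gr_def area_set_def by auto
  then show "dyck n E \<and> area_set n E = {(i, j). 1 \<le> i \<and> i < j \<and> j \<le> n \<and> (i, j) \<notin> Gr n E}"
    using dy by simp
  fix E' assume a: "dyck n E' \<and> area_set n E' = {(i, j). 1 \<le> i \<and> i < j \<and> j \<le> n \<and> (i, j) \<notin> Gr n E}"
  have "area_set n E' = area_set n E"
    using a unfolding Gr_def area_set_def by auto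
  then have "area_seq n E' = area_seq n E" unfolding area_seq_def by simp
  then show "E' = E" using dyck_area_eq[of n E' E] a dy by simp
qed

section \<open>The part listing poset is isomorphic to the relation of its zeta image\<close>

lemma iso_P_Gr:
  assumes dy: "dyck n D"
  shows "isoF n (rk n (\<lambda>j. (area_seq n D j, j))) (part_poset n (area_seq n D)) (Gr n (zeta D))"
proof -
  define w where "w = area_seq n D"
  define k where "k = (\<lambda>j. (w j, j))"
  define \<sigma> where "\<sigma> = rk n k"
  have kinj: "inj_on k {1..n}" unfolding k_def by (auto simp: inj_on_def)
  have zw: "zeta D = word n w" unfolding w_def by (rule zeta_word[OF dy])
  define dn where "dn j = {i \<in> {1..n}. (Suc (w i), i) < (w j, j)}" for j
  have ux: "up_x (zeta D) (\<sigma> j) = card (dn j)" if "j \<in> {1..n}" for j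
    unfolding zw \<sigma>_def k_def dn_def using word_up_x[OF that] .
  have Pdn: "(i, j) \<in> part_poset n w \<longleftrightarrow> i \<in> dn j" if "i \<in> {1..n}" "j \<in> {1..n}" for i j
    using that unfolding part_poset_def dn_def by auto
  have dnc: "i \<in> dn j \<longleftrightarrow> \<sigma> i \<le> card (dn j)" if "i \<in> {1..n}" "j \<in> {1..n}" for i j
    unfolding \<sigma>_def
  proof (rule rk_downclosed[OF kinj _ _ that(1)])
    show "dn j \<subseteq> {1..n}" unfolding dn_def by auto
    fix a b assume ab: "a \<in> dn j" "b \<in> {1..n}" "k b \<le> k a"
    then have "(Suc (w b), b) \<le> (Suc (w a), a)" unfolding k_def by auto
    then show "b \<in> dn j" using ab unfolding dn_def by (auto dest: order.strict_trans1)
  qed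
  have range: "\<sigma> i \<in> {1..n}" if "i \<in> {1..n}" for i using rk_range[OF that] unfolding \<sigma>_def .
  show ?thesis unfolding isoF_def w_def[symmetric] k_def[symmetric] \<sigma>_def[symmetric]
  proof (intro conjI ballI)
    show "bij_betw \<sigma> {1..n} {1..n}" unfolding \<sigma>_def by (rule rk_bij[OF kinj])
    fix i j assume ij: "i \<in> {1..n}" "j \<in> {1..n}"
    show "(i, j) \<in> part_poset n w \<longleftrightarrow> (\<sigma> i, \<sigma> j) \<in> Gr n (zeta D)"
    proof
      assume "(i, j) \<in> part_poset n w"
      then have idn: "i \<in> dn j" using Pdn ij by simp
      then have "k i < k j" unfolding dn_def k_def by (auto dest: order.strict_trans1[rotated])
      then have "\<sigma> i < \<sigma> j" unfolding \<sigma>_def using rk_less[OF kinj ij] by simp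
      then show "(\<sigma> i, \<sigma> j) \<in> Gr n (zeta D)"
        using range[OF ij(1)] range[OF ij(2)] dnc[OF ij] idn ux[OF ij(2)] by (simp add: Gr_mem)
    next
      assume "(\<sigma> i, \<sigma> j) \<in> Gr n (zeta D)"
      then have "\<sigma> i \<le> card (dn j)" using ux[OF ij(2)] by (simp add: Gr_mem)
      then show "(i, j) \<in> part_poset n w" using dnc[OF ij] Pdn[OF ij] by simp
    qed
  qed
qed

lemma dyck_unique_iso:
  assumes "1 \<le> n" "dyck n D1" "dyck n D2"
    "poset_iso n (part_poset n (area_seq n D1)) (part_poset n (area_seq n D2))"
  shows "D1 = D2"
proof -
  have "\<forall>r. 1 \<le> r \<longrightarrow> r \<le> n \<longrightarrow> area_seq n D1 r = area_seq n D2 r"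
    using iso_unique[OF area_seq_areaseq[OF assms(2,1)] area_seq_areaseq[OF assms(3,1)] assms(4)] .
  then show ?thesis
    by (intro dyck_eq[OF assms(2,3)]) (use w_facts[OF assms(2)] w_facts[OF assms(3)] in auto)
qed

lemma zeta_inj:
  assumes "1 \<le> n" "dyck n D1" "dyck n D2" "zeta D1 = zeta D2"
  shows "D1 = D2"
proof -
  obtain f1 where f1: "isoF n f1 (part_poset n (area_seq n D1)) (Gr n (zeta D1))"
    using iso_P_Gr[OF assms(2)] by blast
  obtain f2 where f2: "isoF n f2 (part_poset n (area_seq n D2)) (Gr n (zeta D2))"
    using iso_P_Gr[OF assms(3)] by blast
  have f2': "isoF n f2 (part_poset n (area_seq n D2)) (Gr n (zeta D1))" using f2 assms(4) by simp
  have "isoF n (inv_into {1..n} f2 \<circ> f1) (part_poset n (area_seq n D1)) (part_poset n (area_seq n D2))"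
    using isoF_comp[OF f1 isoF_inv[OF f2']] .
  then show ?thesis using dyck_unique_iso[OF assms(1,2,3)] poset_iso_isoF by blast
qed

lemma finite_dyck: "finite {D. dyck n D}"
proof (rule finite_subset)
  show "{D. dyck n D} \<subseteq> {xs. set xs \<subseteq> {Up, Rt} \<and> length xs = 2*n}"
  proof
    fix D assume "D \<in> {D. dyck n D}"
    moreover have "set D \<subseteq> {Up, Rt}" by (auto intro: step.exhaust)
    ultimately show "D \<in> {xs. set xs \<subseteq> {Up, Rt} \<and> length xs = 2*n}" using dyck_basic by auto
  qed
  show "finite {xs. set xs \<subseteq> {Up, Rt} \<and> length xs = 2*n}" by (rule finite_lists_length_eq) simp
qed

lemma zeta_surj:
  assumes "1 \<le> n" "dyck n E"
  shows "\<exists>D. dyck n D \<and> zeta D = E"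
proof -
  have sub: "zeta ` {D. dyck n D} \<subseteq> {D. dyck n D}"
    using zeta_word word_dyck by auto
  have inj: "inj_on zeta {D. dyck n D}" using zeta_inj[OF assms(1)] by (auto intro: inj_onI)
  have "zeta ` {D. dyck n D} = {D. dyck n D}" using endo_inj_surj[OF finite_dyck sub inj] .
  then show ?thesis using assms(2) by force
qed


section \<open>Building a Dyck path with prescribed up-step positions\<close>

definition kc :: "(nat \<Rightarrow> nat) \<Rightarrow> nat \<times> step \<Rightarrow> nat \<times> nat" where
  "kc d y = (if snd y = Up then (2 * d (fst y), fst y) else (2 * fst y - 1, 0))"

definition build :: "nat \<Rightarrow> (nat \<Rightarrow> nat) \<Rightarrow> step list" where
  "build n d = map snd (sort_key (kc d) (items n))"

lemma kc_Up[simp]: "kc d (j, Up) = (2 * d j, j)" and kc_Rt[simp]: "kc d (j, Rt) = (2 * j - 1, 0)"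
  unfolding kc_def by auto

lemma kc_inj: "inj_on (kc d) (set (items n))"
proof (rule inj_onI)
  fix x y assume x: "x \<in> set (items n)" and y: "y \<in> set (items n)" and e: "kc d x = kc d y"
  obtain a s where xa: "x = (a, s)" by (cases x)
  obtain b t where yb: "y = (b, t)" by (cases y)
  have ab: "1 \<le> a" "1 \<le> b" using x y xa yb items_set by auto
  show "x = y"
  proof (cases s; cases t)
    assume "s = Up" "t = Up" then show ?thesis using e xa yb by simp
  next
    assume "s = Up" "t = Rt" then show ?thesis using e xa yb ab by (auto; presburger)
  next
    assume "s = Rt" "t = Up" then show ?thesis using e xa yb ab by (auto; presburger)
  next
    assume "s = Rt" "t = Rt" then show ?thesis using e xa yb ab by simp
  qed
qed

lemma build_length: "length (build n d) = 2 * n"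
  unfolding build_def by (simp add: items_length)

lemma build_cnt_Up: "cnt Up (build n d) = n"
proof -
  have "cnt Up (build n d) = card {y \<in> set (sort_key (kc d) (items n)). snd y = Up}"
    unfolding build_def by (rule cnt_map_distinct) (simp add: items_distinct)
  also have "\<dots> = card {y \<in> set (items n). True \<and> snd y = Up}" by simp
  also have "\<dots> = card {j \<in> {1..n}. True}" unfolding card_items by simp
  also have "{j \<in> {1..n}. True} = {1..n}" by blast
  also have "card {1..n} = n" by simp
  finally show ?thesis .
qed

lemma build_dyck:
  assumes dl: "\<And>j. j \<in> {1..n} \<Longrightarrow> d j < j"
  shows "dyck n (build n d)"
proof (rule dyck_local[OF build_length build_cnt_Up])
  fix q assume q: "q < length (build n d)" "build n d ! q = Rt"
  let ?S = "sort_key (kc d) (items n)"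
  have ql: "q < length (items n)" using q build_length[of n d] items_length[of n] by simp
  have y: "?S ! q \<in> set (items n)" using ql by (metis length_sort nth_mem set_sort)
  have sy: "snd (?S ! q) = Rt" using q ql unfolding build_def by simp
  obtain x where xq: "?S ! q = (x, Rt)" using sy by (cases "?S ! q") auto
  have x: "x \<in> {1..n}" using y xq items_set by auto
  have "cnt Rt (take (Suc q) (build n d)) = card {j \<in> {1..n}. kc d (j, Rt) \<le> kc d (?S ! q)}"
    unfolding build_def sl_cnt_Suc[OF items_distinct kc_inj ql] card_items ..
  also have "{j \<in> {1..n}. kc d (j, Rt) \<le> kc d (?S ! q)} = {1..x}"
    using x unfolding xq by auto
  also have "card {1..x} \<le> card {j \<in> {1..n}. kc d (j, Up) \<le> kc d (?S ! q)}"
  proof (rule card_mono)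
    show "{1..x} \<subseteq> {j \<in> {1..n}. kc d (j, Up) \<le> kc d (?S ! q)}"
    proof
      fix j assume j: "j \<in> {1..x}"
      then have "d j < j" using dl x by auto
      then show "j \<in> {j \<in> {1..n}. kc d (j, Up) \<le> kc d (?S ! q)}" using j x unfolding xq by auto
    qed
  qed simp
  also have "\<dots> = cnt Up (take (Suc q) (build n d))"
    unfolding build_def sl_cnt_Suc[OF items_distinct kc_inj ql] card_items ..
  finally show "cnt Rt (take (Suc q) (build n d)) \<le> cnt Up (take (Suc q) (build n d))" .
qed

lemma build_up_x:
  assumes dl: "\<And>j. j \<in> {1..n} \<Longrightarrow> d j < j"
    and mono: "\<And>j j'. 1 \<le> j \<Longrightarrow> j \<le> j' \<Longrightarrow> j' \<le> n \<Longrightarrow> d j \<le> d j'"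
    and j: "j \<in> {1..n}"
  shows "up_x (build n d) j = d j"
proof -
  let ?S = "sort_key (kc d) (items n)"
  have "(j, Up) \<in> set (items n)" using j items_set by auto
  then obtain q where q: "q < length (items n)" "?S ! q = (j, Up)" using sl_pos by metis
  have ql: "q < length (build n d)" using q build_length items_length by simp
  have Lq: "build n d ! q = Up" using q unfolding build_def by simp
  have "cnt Up (take q (build n d)) = card {j' \<in> {1..n}. kc d (j', Up) < kc d (j, Up)}"
    unfolding build_def sl_cnt[OF items_distinct kc_inj q(1)] card_items q(2) ..
  also have "{j' \<in> {1..n}. kc d (j', Up) < kc d (j, Up)} = {1..<j}"
  proof (intro equalityI subsetI)
    fix j' assume a: "j' \<in> {j' \<in> {1..n}. kc d (j', Up) < kc d (j, Up)}"
    show "j' \<in> {1..<j}"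
    proof (rule ccontr)
      assume "j' \<notin> {1..<j}"
      then have "j \<le> j'" using a by auto
      then have "d j \<le> d j'" using mono[of j j'] a j by auto
      then show False using a \<open>j \<le> j'\<close> by auto
    qed
  next
    fix j' assume a: "j' \<in> {1..<j}"
    then have "d j' \<le> d j" using mono[of j' j] j by auto
    then show "j' \<in> {j' \<in> {1..n}. kc d (j', Up) < kc d (j, Up)}" using a j by auto
  qed
  finally have "up_pos (build n d) j = q" using up_pos_char[OF ql Lq] j by simp
  then have "up_x (build n d) j = cnt Rt (take q (build n d))" unfolding up_x_def by simp
  also have "\<dots> = card {x \<in> {1..n}. kc d (x, Rt) < kc d (j, Up)}"
    unfolding build_def sl_cnt[OF items_distinct kc_inj q(1)] card_items q(2) ..
  also have "{x \<in> {1..n}. kc d (x, Rt) < kc d (j, Up)} = {1..d j}"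
    using dl[OF j] j by auto
  finally show ?thesis by simp
qed

lemma downset_interval:
  assumes "finite S" "\<And>i. i \<in> S \<Longrightarrow> 1 \<le> i" "\<And>i i'. i \<in> S \<Longrightarrow> 1 \<le> i' \<Longrightarrow> i' \<le> i \<Longrightarrow> i' \<in> S"
  shows "S = {1..card S}"
proof (cases "S = {}")
  case False
  define m where "m = Max S"
  have mS: "m \<in> S" using Max_in[OF assms(1) False] unfolding m_def .
  have "S = {1..m}"
  proof (intro equalityI subsetI)
    fix i assume "i \<in> S" then show "i \<in> {1..m}" using assms(1,2) unfolding m_def by auto
  next
    fix i assume "i \<in> {1..m}" then show "i \<in> S" using assms(3)[OF mS] by auto
  qed
  then show ?thesis by simp
qed simp

lemma monor_build:
  assumes "monor n R"
  shows "\<exists>E. dyck n E \<and> Gr n E = R"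
proof -
  define d where "d j = card {i. (i, j) \<in> R}" for j
  have Rdom: "1 \<le> i \<and> i < j \<and> j \<le> n" if "(i, j) \<in> R" for i j
    using assms that unfolding monor_def by auto
  have Rmono: "(i', j') \<in> R" if "(i, j) \<in> R" "1 \<le> i'" "i' \<le> i" "j \<le> j'" "j' \<le> n" for i j i' j'
    using assms that unfolding monor_def by blast
  have fin: "finite {i. (i, j) \<in> R}" for j
    by (rule finite_subset[of _ "{..<j}"]) (auto dest: Rdom)
  have Sj: "{i. (i, j) \<in> R} = {1..d j}" for j
    unfolding d_def by (rule downset_interval[OF fin]) (auto dest: Rdom intro: Rmono)
  have dl: "d j < j" if "j \<in> {1..n}" for j
  proof -
    have "{i. (i, j) \<in> R} \<subseteq> {1..<j}" by (auto dest: Rdom)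
    then have "d j \<le> card {1..<j}" unfolding d_def by (intro card_mono) auto
    then show ?thesis using that by simp arith
  qed
  have mono: "d j \<le> d j'" if "1 \<le> j" "j \<le> j'" "j' \<le> n" for j j'
  proof -
    have "{i. (i, j) \<in> R} \<subseteq> {i. (i, j') \<in> R}"
    proof
      fix x assume "x \<in> {i. (i, j) \<in> R}"
      then have "(x, j) \<in> R" "1 \<le> x" using Rdom by auto
      then show "x \<in> {i. (i, j') \<in> R}" using Rmono[of x j x j'] that by auto
    qed
    then show ?thesis unfolding d_def by (rule card_mono[OF fin])
  qed
  have dy: "dyck n (build n d)" by (rule build_dyck[OF dl])
  have "Gr n (build n d) = R"
  proof (intro equalityI subsetI)
    fix p assume p: "p \<in> Gr n (build n d)"
    obtain a j where pj: "p = (a, j)" by (cases p)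
    have "1 \<le> a" "a < j" "j \<le> n" "a \<le> up_x (build n d) j" using p pj by (auto simp: Gr_mem)
    moreover have "up_x (build n d) j = d j" using build_up_x[OF dl mono, where j=j] calculation by simp
    ultimately have "a \<in> {i. (i, j) \<in> R}" unfolding Sj by simp
    then show "p \<in> R" using pj by simp
  next
    fix p assume p: "p \<in> R"
    obtain a j where pj: "p = (a, j)" by (cases p)
    have dom: "1 \<le> a" "a < j" "j \<le> n" using Rdom p pj by auto
    have "a \<in> {1..d j}" using p pj Sj[of j] by auto
    moreover have "up_x (build n d) j = d j" using build_up_x[OF dl mono, where j=j] dom by simp
    ultimately show "p \<in> Gr n (build n d)" using dom pj by (auto simp: Gr_mem)
  qed
  then show ?thesis using dy by blast
qed

theorem mainTheorem1:
  fixes n :: nat and U :: "(nat \<times> nat) set"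
  assumes "n \<ge> 1" and "unit_interval_order n U"
  shows "a_map n U = zeta (p_map n U)"
proof -
  have n1: "1 \<le> n" using assms(1) by simp
  obtain E where E: "dyck n E" "Gr n E = U" using monor_build[OF uio_monor[OF assms(2)]] by blast
  obtain D0 where D0: "dyck n D0" "zeta D0 = E" using zeta_surj[OF n1 E(1)] by blast
  obtain g where g: "isoF n g (part_poset n (area_seq n D0)) U"
    using iso_P_Gr[OF D0(1)] D0(2) E(2) by blast
  have "p_map n U = D0" unfolding p_map_def
  proof (rule the_equality)
    show "dyck n D0 \<and> poset_iso n (part_poset n (area_seq n D0)) U"
      using D0(1) g poset_iso_isoF by blast
    fix D assume D: "dyck n D \<and> poset_iso n (part_poset n (area_seq n D)) U"
    then obtain f where f: "isoF n f (part_poset n (area_seq n D)) U" using poset_iso_isoF by blast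
    have "isoF n (inv_into {1..n} g \<circ> f) (part_poset n (area_seq n D)) (part_poset n (area_seq n D0))"
      using isoF_comp[OF f isoF_inv[OF g]] .
    then show "D = D0" using dyck_unique_iso[OF n1] D D0(1) poset_iso_isoF by blast
  qed
  then show ?thesis using a_map_Gr[OF E(1)] D0(2) E(2) by simp
qed


end
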